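(* Let $A\in M_n(\mathbb{Z})$ be invertible such that $x\mapsto A^{-1}x$ is a similarity with respect to Euclidean distance, and let $D\subset\mathbb{Z}^n$ be a subset of a complete residue system mod $A$. Let $\alpha\in T_{A,D-D}$ have a unique $(A,D-D)$-representation $(\alpha_j)_{j\ge1}$, and suppose there exist a positive integer $p$, finite sets $U_1,\dots,U_p,V_1,\dots,V_p\subset\mathbb{R}^n$ and $(\beta_j)_{j\ge1}\in D^{\mathbb{N}}$ with $(D\cap(D+\alpha_j))-\beta_j=U_j$ for $1\le j\le p$ and $(D\cap(D+\alpha_j))-\beta_j=U_\ell+V_\ell$ for $j>p$, $j\equiv\ell \pmod p$, $\ell\in\{1,\dots,p\}$. Consider the IFS consisting precisely of the (distinct) maps $$f(x)=A^{-p}\Big(x+\sum_{\ell=1}^p\big(A^{p-\ell}u_\ell+A^{-\ell}v_\ell\big)\Big),\qquad u_\ell\in U_\ell,\ v_\ell\in V_\ell\ (\ell=1,\dots,p).$$ If this IFS satisfies the open set condition, then it satisfies the strong separation condition.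
   Context: A similarity means a map $f$ with $\|f(x)-f(y)\|=c\|x-y\|$ for some $c\in(0,1)$ and all $x,y$. For finite $E\subset\mathbb{R}^n$, $\pi_{A,E}((e_j)_{j\ge1})=\sum_{j\ge1}A^{-j}e_j$, $T_{A,E}=\pi_{A,E}(E^{\mathbb{N}})$, and an $(A,E)$-representation of $x$ is a sequence $(e_j)\in E^{\mathbb{N}}$ with $\pi_{A,E}((e_j))=x$. $D+t=\{d+t:d\in D\}$, $U+V=\{u+v\}$ (Minkowski sum). A complete residue system mod $A$ is a set $\mathcal{D}\subset\mathbb{Z}^n$ mapping bijectively onto $\mathbb{Z}^n/A\mathbb{Z}^n$. An IFS $\{f_i\}_{i=1}^N$ with attractor $K$ satisfies the open set condition if there is a nonempty bounded open set $V$ with $\bigcup_i f_i(V)\subset V$ and the $f_i(V)$ pairwise disjoint; it satisfies the strong separation condition if the sets $f_i(K)$ are pairwise disjoint. *)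

theory Defs
  imports "HOL-Analysis.Analysis"
begin

definition lattice :: "(real^'n) set" where
  "lattice = {x. \<forall>i. x $ i \<in> \<int>}"

definition int_matrix :: "real^'n^'n \<Rightarrow> bool" where
  "int_matrix A \<longleftrightarrow> (\<forall>i j. A $ i $ j \<in> \<int>)"

definition Apow :: "real^'n^'n \<Rightarrow> nat \<Rightarrow> real^'n \<Rightarrow> real^'n" where
  "Apow A k = ((\<lambda>x. A *v x) ^^ k)"

definition Ainvpow :: "real^'n^'n \<Rightarrow> nat \<Rightarrow> real^'n \<Rightarrow> real^'n" where
  "Ainvpow A k = ((\<lambda>x. matrix_inv A *v x) ^^ k)"

definition is_similarity :: "(real^'n \<Rightarrow> real^'n) \<Rightarrow> bool" where
  "is_similarity f \<longleftrightarrow> (\<exists>c. 0 < c \<and> c < 1 \<and> (\<forall>x y. norm (f x - f y) = c * norm (x - y)))"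

definition complete_residue_system :: "real^'n^'n \<Rightarrow> (real^'n) set \<Rightarrow> bool" where
  "complete_residue_system A R \<longleftrightarrow> R \<subseteq> lattice \<and>
     (\<forall>z\<in>lattice. \<exists>!d. d \<in> R \<and> z - d \<in> (\<lambda>x. A *v x) ` lattice)"

text \<open>Sequences in E^N, indexed by j >= 1 (value at 0 is irrelevant).\<close>
definition seqs :: "'a set \<Rightarrow> (nat \<Rightarrow> 'a) set" where
  "seqs E = {e. \<forall>j\<ge>1. e j \<in> E}"

definition piAE :: "real^'n^'n \<Rightarrow> (nat \<Rightarrow> real^'n) \<Rightarrow> real^'n" where
  "piAE A e = (\<Sum>j. Ainvpow A (Suc j) (e (Suc j)))"

definition TAE :: "real^'n^'n \<Rightarrow> (real^'n) set \<Rightarrow> (real^'n) set" where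
  "TAE A E = piAE A ` seqs E"

definition is_rep :: "real^'n^'n \<Rightarrow> (real^'n) set \<Rightarrow> real^'n \<Rightarrow> (nat \<Rightarrow> real^'n) \<Rightarrow> bool" where
  "is_rep A E x e \<longleftrightarrow> e \<in> seqs E \<and> piAE A e = x"

definition unique_rep :: "real^'n^'n \<Rightarrow> (real^'n) set \<Rightarrow> real^'n \<Rightarrow> (nat \<Rightarrow> real^'n) \<Rightarrow> bool" where
  "unique_rep A E x e \<longleftrightarrow> is_rep A E x e \<and> (\<forall>e'. is_rep A E x e' \<longrightarrow> (\<forall>j\<ge>1. e' j = e j))"

definition setdiff :: "('a::ab_group_add) set \<Rightarrow> 'a set \<Rightarrow> 'a set" where
  "setdiff U V = {u - v | u v. u \<in> U \<and> v \<in> V}"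

definition minksum :: "('a::ab_group_add) set \<Rightarrow> 'a set \<Rightarrow> 'a set" where
  "minksum U V = {u + v | u v. u \<in> U \<and> v \<in> V}"

definition translate :: "('a::ab_group_add) set \<Rightarrow> 'a \<Rightarrow> 'a set" where
  "translate D t = (\<lambda>d. d + t) ` D"

definition is_attractor :: "('a::metric_space \<Rightarrow> 'a) set \<Rightarrow> 'a set \<Rightarrow> bool" where
  "is_attractor F K \<longleftrightarrow> compact K \<and> K \<noteq> {} \<and> K = (\<Union>f\<in>F. f ` K)"

definition open_set_condition :: "('a::metric_space \<Rightarrow> 'a) set \<Rightarrow> bool" where
  "open_set_condition F \<longleftrightarrow> (\<exists>V. open V \<and> V \<noteq> {} \<and> bounded V \<and>
     (\<Union>f\<in>F. f ` V) \<subseteq> V \<and> pairwise (\<lambda>f g. disjnt (f ` V) (g ` V)) F)"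

definition strong_separation_condition :: "('a::metric_space \<Rightarrow> 'a) set \<Rightarrow> bool" where
  "strong_separation_condition F \<longleftrightarrow> (\<forall>K. is_attractor F K \<longrightarrow>
     pairwise (\<lambda>f g. disjnt (f ` K) (g ` K)) F)"

definition the_IFS :: "real^'n^'n \<Rightarrow> nat \<Rightarrow> (nat \<Rightarrow> (real^'n) set) \<Rightarrow> (nat \<Rightarrow> (real^'n) set)
    \<Rightarrow> (real^'n \<Rightarrow> real^'n) set" where
  "the_IFS A p U V = {(\<lambda>x. Ainvpow A p (x + (\<Sum>l=1..p. Apow A (p - l) (u l) + Ainvpow A l (v l))))
     | u v. \<forall>l\<in>{1..p}. u l \<in> U l \<and> v l \<in> V l}"

end

theory Submission
  imports Defs
begin


lemma minv: assumes "invertible (A::real^'n^'n)"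
  shows "A ** matrix_inv A = mat 1" "matrix_inv A ** A = mat 1"
proof -
  have "\<exists>A'. A ** A' = mat 1 \<and> A' ** A = mat 1" using assms unfolding invertible_def by blast
  hence "A ** matrix_inv A = mat 1 \<and> matrix_inv A ** A = mat 1"
    unfolding matrix_inv_def by (rule someI_ex)
  thus "A ** matrix_inv A = mat 1" "matrix_inv A ** A = mat 1" by auto
qed

lemma linear_Ainvpow: "linear (Ainvpow A k)"
proof (induction k)
  case 0 then show ?case by (simp add: Ainvpow_def linear_id[unfolded id_def])
next
  case (Suc k)
  have e: "Ainvpow A (Suc k) = (\<lambda>x. matrix_inv A *v x) \<circ> Ainvpow A k"
    by (simp add: Ainvpow_def)
  show ?case by (subst e) (rule linear_compose[OF Suc matrix_vector_mul_linear])
qed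

lemma linear_Apow: "linear (Apow A k)"
proof (induction k)
  case 0 then show ?case by (simp add: Apow_def linear_id[unfolded id_def])
next
  case (Suc k)
  have e: "Apow A (Suc k) = (\<lambda>x. A *v x) \<circ> Apow A k"
    by (simp add: Apow_def)
  show ?case by (subst e) (rule linear_compose[OF Suc matrix_vector_mul_linear])
qed

lemma Ainvpow_add: "Ainvpow A (m + k) x = Ainvpow A m (Ainvpow A k x)"
  by (simp add: Ainvpow_def funpow_add)

lemma Ainvpow_0[simp]: "Ainvpow A 0 x = x" by (simp add: Ainvpow_def)

lemma Ainvpow_Apow: assumes "invertible A" shows "Ainvpow A k (Apow A k x) = x"
proof (induction k)
  case 0 then show ?case by (simp add: Apow_def)
next
  case (Suc k)
  have e1: "Apow A (Suc k) x = A *v Apow A k x" by (simp add: Apow_def)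
  have e2: "Ainvpow A (Suc k) y = Ainvpow A k (matrix_inv A *v y)" for y
    by (simp add: Ainvpow_def funpow_Suc_right del: funpow.simps)
  have "Ainvpow A (Suc k) (Apow A (Suc k) x) = Ainvpow A k (matrix_inv A *v (A *v Apow A k x))"
    by (simp only: e1 e2)
  also have "matrix_inv A *v (A *v Apow A k x) = Apow A k x"
    by (simp add: matrix_vector_mul_assoc minv[OF assms])
  finally show ?case using Suc by simp
qed

lemma Ainvpow_Apow_le: assumes "invertible A" "l \<le> p"
  shows "Ainvpow A p (Apow A (p - l) x) = Ainvpow A l x"
proof -
  have "p = l + (p - l)" using assms by simp
  hence "Ainvpow A p (Apow A (p - l) x) = Ainvpow A l (Ainvpow A (p-l) (Apow A (p - l) x))"
    by (metis Ainvpow_add)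
  thus ?thesis using Ainvpow_Apow[OF assms(1)] by simp
qed

lemma norm_Ainvpow: assumes "\<And>x. norm (matrix_inv A *v x) = c * norm x"
  shows "norm (Ainvpow A k x) = c ^ k * norm x"
proof (induction k)
  case 0 then show ?case by simp
next
  case (Suc k)
  have "Ainvpow A (Suc k) x = matrix_inv A *v Ainvpow A k x" by (simp add: Ainvpow_def)
  then show ?case using Suc assms by simp
qed

definition Pf :: "real^'n^'n \<Rightarrow> nat \<Rightarrow> (nat \<Rightarrow> real^'n) \<Rightarrow> real^'n" where
  "Pf A p u = (\<Sum>l=1..p. Ainvpow A l (u l))"

definition phi :: "real^'n^'n \<Rightarrow> nat \<Rightarrow> (nat \<Rightarrow> real^'n) \<Rightarrow> (nat \<Rightarrow> real^'n) \<Rightarrow> real^'n \<Rightarrow> real^'n" where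
  "phi A p u v = (\<lambda>x. Ainvpow A p (x + (\<Sum>l=1..p. Apow A (p - l) (u l) + Ainvpow A l (v l))))"

lemma the_IFS_phi: "the_IFS A p U V = {phi A p u v | u v. \<forall>l\<in>{1..p}. u l \<in> U l \<and> v l \<in> V l}"
  unfolding the_IFS_def phi_def by simp

lemma phi_eq: assumes "invertible A"
  shows "phi A p u v x = Pf A p u + Ainvpow A p (Pf A p v + x)"
proof -
  interpret L: linear "Ainvpow A p" by (rule linear_Ainvpow)
  interpret L2: linear "Ainvpow A l" for l by (rule linear_Ainvpow)
  have "phi A p u v x = Ainvpow A p x + (\<Sum>l=1..p. Ainvpow A p (Apow A (p - l) (u l)))
      + (\<Sum>l=1..p. Ainvpow A p (Ainvpow A l (v l)))"
    unfolding phi_def by (simp add: L.add L.sum sum.distrib)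
  also have "(\<Sum>l=1..p. Ainvpow A p (Apow A (p - l) (u l))) = Pf A p u"
    unfolding Pf_def by (rule sum.cong) (auto simp: Ainvpow_Apow_le[OF assms])
  also have "(\<Sum>l=1..p. Ainvpow A p (Ainvpow A l (v l))) = Ainvpow A p (Pf A p v)"
    unfolding Pf_def by (simp add: L.sum)
  finally show ?thesis by (simp add: L.add algebra_simps)
qed



definition dig :: "nat \<Rightarrow> (nat \<Rightarrow> nat \<Rightarrow> real^'n) \<Rightarrow> (nat \<Rightarrow> nat \<Rightarrow> real^'n) \<Rightarrow> nat \<Rightarrow> real^'n" where
  "dig p us vs j = us ((j-1) div p) ((j-1) mod p + 1) +
     (if (j-1) div p = 0 then 0 else vs ((j-1) div p - 1) ((j-1) mod p + 1))"

lemma sum_lessThan_add_split: "(\<Sum>i<m+(n::nat). (f::nat\<Rightarrow>'a::comm_monoid_add) i) = (\<Sum>i<m. f i) + (\<Sum>i<n. f (m+i))"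
  by (induction n) (auto simp: add.assoc)

lemma dig_block: assumes "0 < p" "i < p"
  shows "dig p us vs (Suc (p*K+i)) = us K (Suc i) + (if K = 0 then 0 else vs (K-1) (Suc i))"
proof -
  have "(p*K+i) div p = K" "(p*K+i) mod p = i" using assms by auto
  thus ?thesis unfolding dig_def by simp
qed

lemma block_sum: assumes "invertible A" "0 < p"
  shows "(\<Sum>i<p*K+p. Ainvpow A (Suc i) (dig p us vs (Suc i))) =
     (\<Sum>i<p*K. Ainvpow A (Suc i) (dig p us vs (Suc i))) +
     Ainvpow A (p*K) ((if K = 0 then 0 else Pf A p (vs (K-1))) + Pf A p (us K))"
proof -
  interpret L: linear "Ainvpow A (p*K)" by (rule linear_Ainvpow)
  have "(\<Sum>i<p. Ainvpow A (Suc (p*K+i)) (dig p us vs (Suc (p*K+i)))) =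
        (\<Sum>i<p. Ainvpow A (Suc (p*K+i)) (us K (Suc i) + (if K = 0 then 0 else vs (K-1) (Suc i))))"
    by (rule sum.cong) (auto simp: dig_block[OF assms(2)])
  also have "\<dots> = (\<Sum>i<p. Ainvpow A (p*K) (Ainvpow A (Suc i) (us K (Suc i)))) +
       (\<Sum>i<p. Ainvpow A (p*K) (Ainvpow A (Suc i) (if K = 0 then 0 else vs (K-1) (Suc i))))"
    by (simp add: sum.distrib[symmetric] linear_add[OF linear_Ainvpow] Ainvpow_add[symmetric])
  also have "\<dots> = Ainvpow A (p*K) ((if K = 0 then 0 else Pf A p (vs (K-1))) + Pf A p (us K))"
    unfolding Pf_def sum.atLeast1_atMost_eq[where n=p, unfolded One_nat_def[symmetric]]
    by (auto simp: L.add L.sum linear_0[OF linear_Ainvpow])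
  finally show ?thesis by (simp add: sum_lessThan_add_split)
qed



lemma norm_Pf: assumes nc: "\<forall>x. norm (matrix_inv A *v x) = c * norm x" and c: "0 < c" "c < 1"
  and b: "\<forall>l\<in>{1..p}. norm (v l) \<le> B"
  shows "norm (Pf A p v) \<le> real p * B"
proof -
  have "norm (Pf A p v) \<le> (\<Sum>l=1..p. norm (Ainvpow A l (v l)))"
    unfolding Pf_def by (rule norm_sum)
  also have "\<dots> \<le> (\<Sum>l=1..p. B)"
  proof (rule sum_mono)
    fix l assume l: "l \<in> {1..p}"
    have "norm (Ainvpow A l (v l)) = c^l * norm (v l)" by (simp add: norm_Ainvpow[OF nc[rule_format]])
    also have "\<dots> \<le> 1 * norm (v l)" by (rule mult_right_mono) (use c in \<open>auto intro: power_le_one\<close>)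
    moreover have "norm (v l) \<le> B" using b l by blast
    ultimately show "norm (Ainvpow A l (v l)) \<le> B" by linarith
  qed
  finally show ?thesis by simp
qed

lemma coding_series:
  assumes inv: "invertible A" and p: "0<p" and c: "0<c" "c<1"
    and nc: "\<forall>x. norm (matrix_inv A *v x) = c * norm x"
    and rec: "\<forall>k. xs k = phi A p (us k) (vs k) (xs (Suc k))"
    and b1: "\<forall>k. norm (xs k) \<le> B1"
    and b2: "\<forall>k l. l \<in> {1..p} \<longrightarrow> norm (us k l) \<le> B2 \<and> norm (vs k l) \<le> B2"
  shows "summable (\<lambda>i. Ainvpow A (Suc i) (dig p us vs (Suc i)))"
    and "xs 0 = (\<Sum>i. Ainvpow A (Suc i) (dig p us vs (Suc i)))"
proof -
  define F where "F = (\<lambda>i. Ainvpow A (Suc i) (dig p us vs (Suc i)))"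
  define S where "S = (\<lambda>n. \<Sum>i<n. F i)"
  define E where "E = (\<lambda>K. if K = 0 then 0 else Pf A p (vs (K-1)))"
  have B2: "0 \<le> B2" using b2[rule_format, of 1 0] p by (auto intro: order_trans[OF norm_ge_zero])
  have B1: "0 \<le> B1" using b1 by (auto intro: order_trans[OF norm_ge_zero])
  have nd: "norm (dig p us vs (Suc i)) \<le> 2 * B2" for i
  proof -
    have l: "i mod p + 1 \<in> {1..p}" using p by (auto simp: Suc_le_eq)
    have "norm (dig p us vs (Suc i)) \<le> norm (us (i div p) (i mod p + 1)) +
       norm (if i div p = 0 then 0 else vs (i div p - 1) (i mod p + 1))"
      unfolding dig_def by (simp add: norm_triangle_ineq)
    also have "\<dots> \<le> B2 + B2" using b2 l B2 by (intro add_mono) auto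
    finally show ?thesis by simp
  qed
  have nF: "norm (F i) \<le> (2 * B2 * c) * c ^ i" for i
  proof -
    have "norm (F i) = c ^ Suc i * norm (dig p us vs (Suc i))"
      unfolding F_def by (simp add: norm_Ainvpow[OF nc[rule_format]])
    also have "\<dots> \<le> c ^ Suc i * (2 * B2)" using nd c by (intro mult_left_mono) auto
    finally show ?thesis by (simp add: algebra_simps)
  qed
  have sg: "summable (\<lambda>i. (2 * B2 * c) * c ^ i)"
    using c by (intro summable_mult summable_geometric) auto
  have sF: "summable F"
    by (rule summable_comparison_test[OF _ sg]) (use nF in auto)
  then show "summable (\<lambda>i. Ainvpow A (Suc i) (dig p us vs (Suc i)))" unfolding F_def .
  have ident: "xs 0 = S (p*K) + Ainvpow A (p*K) (E K + xs K)" for K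
  proof (induction K)
    case 0 then show ?case by (simp add: S_def E_def)
  next
    case (Suc K)
    interpret L: linear "Ainvpow A (p*K)" by (rule linear_Ainvpow)
    have bs: "S (p*K+p) = S (p*K) + Ainvpow A (p*K) (E K + Pf A p (us K))"
      unfolding S_def F_def E_def by (rule block_sum[OF inv p])
    have xk: "xs K = Pf A p (us K) + Ainvpow A p (Pf A p (vs K) + xs (Suc K))"
      using rec phi_eq[OF inv] by metis
    have ee: "Ainvpow A (p*K) (E K + xs K) = Ainvpow A (p*K) (E K + Pf A p (us K))
       + Ainvpow A (p*K + p) (E (Suc K) + xs (Suc K))"
      unfolding xk by (simp add: L.add Ainvpow_add E_def add.assoc)
    have pk: "p * Suc K = p*K + p" by simp
    show ?case unfolding pk using Suc bs ee by (simp add: add.assoc)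
  qed
  have t0: "(\<lambda>K. Ainvpow A (p*K) (E K + xs K)) \<longlonglongrightarrow> 0"
  proof (rule Lim_null_comparison)
    show "\<forall>\<^sub>F K in sequentially. norm (Ainvpow A (p*K) (E K + xs K)) \<le> (c^p)^K * (real p * B2 + B1)"
    proof (intro always_eventually allI)
      fix K
      have "norm (E K) \<le> real p * B2"
        using norm_Pf[OF nc c, of p "vs (K-1)" B2] b2 B2 by (auto simp: E_def)
      hence "norm (E K + xs K) \<le> real p * B2 + B1"
        using b1 by (meson add_mono norm_triangle_le)
      hence "c^(p*K) * norm (E K + xs K) \<le> c^(p*K) * (real p * B2 + B1)"
        using c by (intro mult_left_mono) auto
      thus "norm (Ainvpow A (p*K) (E K + xs K)) \<le> (c^p)^K * (real p * B2 + B1)"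
        by (simp add: norm_Ainvpow[OF nc[rule_format]] power_mult)
    qed
    have "norm (c^p) < 1" using c p by (simp add: power_less_one_iff abs_of_pos power_strict_mono) 
    hence "(\<lambda>K. (c^p)^K) \<longlonglongrightarrow> 0" by (rule LIMSEQ_power_zero)
    thus "(\<lambda>K. (c^p)^K * (real p * B2 + B1)) \<longlonglongrightarrow> 0" by (rule tendsto_mult_left_zero)
  qed
  have "(\<lambda>K. S (p*K)) \<longlonglongrightarrow> xs 0 - 0"
  proof -
    have "(\<lambda>K. S (p*K)) = (\<lambda>K. xs 0 - Ainvpow A (p*K) (E K + xs K))"
      using ident by (auto simp: fun_eq_iff algebra_simps)
    thus ?thesis using tendsto_diff[OF tendsto_const t0] by simp
  qed
  moreover have "(\<lambda>K. S (p*K)) \<longlonglongrightarrow> suminf F"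
  proof -
    have sm: "strict_mono (\<lambda>K::nat. p*K)" using p by (simp add: strict_mono_def)
    have "S \<longlonglongrightarrow> suminf F" unfolding S_def by (rule summable_LIMSEQ[OF sF])
    from LIMSEQ_subseq_LIMSEQ[OF this sm] show ?thesis by (simp add: o_def)
  qed
  ultimately show "xs 0 = (\<Sum>i. Ainvpow A (Suc i) (dig p us vs (Suc i)))"
    unfolding F_def using LIMSEQ_unique by fastforce
qed



lemma det_Ints: assumes "\<forall>i j. (M::real^'n^'n) $ i $ j \<in> \<int>" shows "det M \<in> \<int>"
  unfolding det_def using assms by (intro Ints_sum Ints_mult Ints_prod) auto

lemma det_scale_lattice:
  assumes im: "int_matrix A" and inv: "invertible A" and b: "b \<in> lattice"
  shows "det A *\<^sub>R b \<in> (\<lambda>x. A *v x) ` lattice"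
proof -
  have d0: "det A \<noteq> 0" using inv invertible_det_nz by blast
  define x where "x = (\<chi> k. det(\<chi> i j. if j=k then b$i else A$i$j) / det A)"
  have Ax: "A *v x = b" using cramer[OF d0, of x b] x_def by simp
  have "det A *\<^sub>R x \<in> lattice"
    unfolding lattice_def
  proof (intro CollectI allI)
    fix k
    have "(det A *\<^sub>R x) $ k = det(\<chi> i j. if j=k then b$i else A$i$j)" using d0 by (simp add: x_def)
    also have "\<dots> \<in> \<int>" using im b by (intro det_Ints) (auto simp: int_matrix_def lattice_def)
    finally show "(det A *\<^sub>R x) $ k \<in> \<int>" .
  qed
  moreover have "A *v (det A *\<^sub>R x) = det A *\<^sub>R b" by (simp add: matrix_vector_mult_scaleR Ax)
  ultimately show ?thesis by (metis image_eqI)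
qed

lemma crs_finite:
  fixes A :: "real^'n^'n"
  assumes im: "int_matrix A" and inv: "invertible A" and crs: "complete_residue_system A R"
  shows "finite R"
proof -
  have "det A \<in> \<int>" using im det_Ints by (auto simp: int_matrix_def)
  then obtain mi where mi: "det A = of_int mi" by (auto elim: Ints_cases)
  have d0: "mi \<noteq> 0" using inv invertible_det_nz mi by fastforce
  define m where "m = \<bar>mi\<bar>"
  have m0: "m > 0" using d0 m_def by simp
  define key where "key = (\<lambda>d::real^'n. \<lambda>i. \<lfloor>d $ i\<rfloor> mod m)"
  have RL: "R \<subseteq> lattice" using crs unfolding complete_residue_system_def by blast
  have inj: "inj_on key R"
  proof (rule inj_onI)
    fix d1 d2 assume d1: "d1 \<in> R" and d2: "d2 \<in> R" and k: "key d1 = key d2"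
    have "\<forall>i. \<exists>t::int. d1 $ i - d2 $ i = of_int mi * of_int t"
    proof
      fix i
      obtain a1 where a1: "d1 $ i = of_int a1" using d1 RL by (auto simp: lattice_def elim!: Ints_cases)
      obtain a2 where a2: "d2 $ i = of_int a2" using d2 RL by (auto simp: lattice_def elim!: Ints_cases)
      have "a1 mod m = a2 mod m" using k a1 a2 unfolding key_def by (metis floor_of_int)
      hence "m dvd a1 - a2" by (simp add: mod_eq_dvd_iff)
      hence "mi dvd a1 - a2" using m_def by simp
      then obtain t where "a1 - a2 = mi * t" by (auto elim: dvdE)
      hence "d1 $ i - d2 $ i = of_int mi * of_int t" using a1 a2 by (metis of_int_diff of_int_mult)
      thus "\<exists>t::int. d1 $ i - d2 $ i = of_int mi * of_int t" by blast
    qed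
    then obtain t where t: "\<And>i. d1 $ i - d2 $ i = of_int mi * of_int (t i)" by metis
    define tv where "tv = (\<chi> i. (of_int (t i) :: real))"
    have tvl: "tv \<in> lattice" by (simp add: tv_def lattice_def)
    have "d1 - d2 = det A *\<^sub>R tv" using t by (simp add: vec_eq_iff tv_def mi)
    hence dd: "d1 - d2 \<in> (\<lambda>x. A *v x) ` lattice" using det_scale_lattice[OF im inv tvl] by simp
    have z: "d1 - d1 \<in> (\<lambda>x. A *v x) ` lattice"
    proof -
      have "(0::real^'n) \<in> lattice" by (simp add: lattice_def)
      moreover have "A *v 0 = (0::real^'n)" by simp
      ultimately show ?thesis by (metis diff_self image_eqI)
    qed
    have "d1 \<in> lattice" using d1 RL by blast
    hence "\<exists>!d. d \<in> R \<and> d1 - d \<in> (\<lambda>x. A *v x) ` lattice" using crs unfolding complete_residue_system_def by blast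
    thus "d1 = d2" using d1 d2 dd z by blast
  qed
  have "key ` R \<subseteq> {f. \<forall>i. (i \<in> UNIV \<longrightarrow> f i \<in> {0..<m}) \<and> (i \<notin> UNIV \<longrightarrow> f i = 0)}"
    using m0 by (auto simp: key_def)
  moreover have "finite {f. \<forall>i::'n. (i \<in> UNIV \<longrightarrow> f i \<in> {0..<m}) \<and> (i \<notin> UNIV \<longrightarrow> f i = 0)}"
    by (rule finite_set_of_finite_funs) auto
  ultimately have "finite (key ` R)" by (rule finite_subset)
  thus ?thesis using inj finite_imageD by blast
qed



lemma digits_valid:
  assumes p: "0 < p"
    and val: "\<forall>k l. l \<in> {1..p} \<longrightarrow> us k l \<in> U l \<and> vs k l \<in> V l"
    and h1: "\<forall>j\<in>{1..p}. setdiff (D \<inter> translate D (alpha j)) {beta j} = U j"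
    and h2: "\<forall>j l. j > p \<longrightarrow> l \<in> {1..p} \<longrightarrow> j mod p = l mod p \<longrightarrow>
            setdiff (D \<inter> translate D (alpha j)) {beta j} = minksum (U l) (V l)"
    and j: "1 \<le> j"
  shows "dig p us vs j \<in> setdiff (D \<inter> translate D (alpha j)) {beta j}"
proof -
  define k where "k = (j-1) div p"
  define l where "l = (j-1) mod p + 1"
  have l1: "l \<in> {1..p}" using p by (auto simp: l_def Suc_le_eq)
  have jkl: "j = p*k + l" using j by (simp add: k_def l_def)
  have dg: "dig p us vs j = us k l + (if k = 0 then 0 else vs (k-1) l)"
    unfolding dig_def k_def l_def by simp
  show ?thesis
  proof (cases "k = 0")
    case True
    hence "j = l" using jkl by simp
    thus ?thesis using dg True h1 l1 val by auto
  next
    case False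
    have "p*k \<ge> p" using False by simp
    moreover have "l \<ge> 1" using l1 by simp
    ultimately have gt: "j > p" using jkl by linarith
    have md: "j mod p = l mod p" using jkl by simp
    have "us k l + vs (k-1) l \<in> minksum (U l) (V l)" using val l1 unfolding minksum_def by blast
    thus ?thesis using h2 gt md l1 dg False by auto
  qed
qed

lemma two_blocks:
  assumes "invertible A" "0 < p"
  shows "(\<Sum>i<2*p. Ainvpow A (Suc i) (dig p us vs (Suc i))) =
     Pf A p (us 0) + Ainvpow A p (Pf A p (vs 0) + Pf A p (us 1))"
proof -
  have a: "(\<Sum>i<p*0+p. Ainvpow A (Suc i) (dig p us vs (Suc i))) = Pf A p (us 0)"
    using block_sum[OF assms, where K=0 and us=us and vs=vs] by simp
  have b: "(\<Sum>i<p*1+p. Ainvpow A (Suc i) (dig p us vs (Suc i))) =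
     (\<Sum>i<p*1. Ainvpow A (Suc i) (dig p us vs (Suc i))) + Ainvpow A p (Pf A p (vs 0) + Pf A p (us 1))"
    using block_sum[OF assms, where K=1 and us=us and vs=vs] by simp
  have e: "2*p = p+p" by simp
  show ?thesis unfolding e using a b by simp
qed



theorem mainTheorem8:
  fixes A :: "real^'n^'n" and D :: "(real^'n) set" and a :: "real^'n"
    and alpha beta :: "nat \<Rightarrow> real^'n" and p :: nat
    and U V :: "nat \<Rightarrow> (real^'n) set"
  assumes "int_matrix A" and "invertible A"
    and "is_similarity (\<lambda>x. matrix_inv A *v x)"
    and "\<exists>R. complete_residue_system A R \<and> D \<subseteq> R"
    and "a \<in> TAE A (setdiff D D)"
    and "unique_rep A (setdiff D D) a alpha"
    and "p > 0"
    and "\<forall>l\<in>{1..p}. finite (U l) \<and> finite (V l)"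
    and "beta \<in> seqs D"
    and "\<forall>j\<in>{1..p}. setdiff (D \<inter> translate D (alpha j)) {beta j} = U j"
    and "\<forall>j l. j > p \<longrightarrow> l \<in> {1..p} \<longrightarrow> j mod p = l mod p \<longrightarrow>
            setdiff (D \<inter> translate D (alpha j)) {beta j} = minksum (U l) (V l)"
    and "open_set_condition (the_IFS A p U V)"
  shows "strong_separation_condition (the_IFS A p U V)"
proof -
  note inv = assms(2) and p = assms(7) and h1 = assms(10) and h2 = assms(11)
  obtain c where c: "0 < c" "c < 1"
    and cs: "\<forall>x y. norm (matrix_inv A *v x - matrix_inv A *v y) = c * norm (x - y)"
    using assms(3) unfolding is_similarity_def by blast
  have nc: "\<forall>x. norm (matrix_inv A *v x) = c * norm x"
    using cs by (metis diff_zero matrix_vector_mult_0_right)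
  obtain R where R: "complete_residue_system A R" "D \<subseteq> R" using assms(4) by blast
  have fD: "finite D" using crs_finite[OF assms(1) inv R(1)] R(2) finite_subset by blast
  have "setdiff D D \<subseteq> (\<lambda>(x,y). x - y) ` (D \<times> D)" unfolding setdiff_def by auto
  hence fDD: "finite (setdiff D D)" using fD by (meson finite_SigmaI finite_imageI finite_subset)
  then obtain B3 where B3: "\<forall>x\<in>setdiff D D. norm x \<le> B3"
    using finite_imp_bounded bounded_iff by blast
  have al: "alpha \<in> seqs (setdiff D D)" and pa: "piAE A alpha = a"
    and uq: "\<And>e'. is_rep A (setdiff D D) a e' \<Longrightarrow> \<forall>j\<ge>1. e' j = alpha j"
    using assms(6) unfolding unique_rep_def is_rep_def by auto
  have salpha: "summable (\<lambda>i. Ainvpow A (Suc i) (alpha (Suc i)))"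
  proof (rule summable_comparison_test[OF _ summable_mult[OF summable_geometric[of c], of "c * B3"]])
    show "norm c < 1" using c by simp
    show "\<exists>N. \<forall>n\<ge>N. norm (Ainvpow A (Suc n) (alpha (Suc n))) \<le> c * B3 * c ^ n"
    proof (intro exI allI impI)
      fix n :: nat
      have "alpha (Suc n) \<in> setdiff D D" using al unfolding seqs_def by auto
      hence "norm (alpha (Suc n)) \<le> B3" using B3 by blast
      hence "c ^ Suc n * norm (alpha (Suc n)) \<le> c ^ Suc n * B3" using c by (intro mult_left_mono) auto
      thus "norm (Ainvpow A (Suc n) (alpha (Suc n))) \<le> c * B3 * c ^ n"
        by (simp add: norm_Ainvpow[OF nc[rule_format]] algebra_simps)
    qed
  qed
  have "finite (\<Union>l\<in>{1..p}. U l \<union> V l)" using assms(8) by auto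
  then obtain B2 where B2: "\<forall>x\<in>(\<Union>l\<in>{1..p}. U l \<union> V l). norm x \<le> B2"
    using finite_imp_bounded bounded_iff by blast
  show ?thesis
    unfolding strong_separation_condition_def
  proof (intro allI impI)
    fix K assume att: "is_attractor (the_IFS A p U V) K"
    show "pairwise (\<lambda>f g. disjnt (f ` K) (g ` K)) (the_IFS A p U V)"
    proof (rule pairwiseI)
      fix f g assume fI: "f \<in> the_IFS A p U V" and gI: "g \<in> the_IFS A p U V" and fg: "f \<noteq> g"
      show "disjnt (f ` K) (g ` K)"
      proof (rule ccontr)
        assume "\<not> disjnt (f ` K) (g ` K)"
        then obtain x y where xK: "x \<in> K" and yK: "y \<in> K" and fxgy: "f x = g y"
          unfolding disjnt_def by blast
        obtain uf vf where f: "f = phi A p uf vf" and vf: "\<forall>l\<in>{1..p}. uf l \<in> U l \<and> vf l \<in> V l"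
          using fI unfolding the_IFS_phi by blast
        obtain ug vg where g: "g = phi A p ug vg" and vg: "\<forall>l\<in>{1..p}. ug l \<in> U l \<and> vg l \<in> V l"
          using gI unfolding the_IFS_phi by blast
        have Kc: "compact K" and Keq: "K = (\<Union>h\<in>the_IFS A p U V. h ` K)"
          using att unfolding is_attractor_def by auto
        obtain B1 where B1: "\<forall>x\<in>K. norm x \<le> B1"
          using compact_imp_bounded[OF Kc] bounded_iff by blast
        have "\<forall>x\<in>K. \<exists>u v y. (\<forall>l\<in>{1..p}. u l \<in> U l \<and> v l \<in> V l) \<and> y \<in> K \<and> x = phi A p u v y"
        proof
          fix x assume "x \<in> K"
          then obtain h where "h \<in> the_IFS A p U V" "x \<in> h ` K" using Keq by blast
          thus "\<exists>u v y. (\<forall>l\<in>{1..p}. u l \<in> U l \<and> v l \<in> V l) \<and> y \<in> K \<and> x = phi A p u v y"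
            unfolding the_IFS_phi by blast
        qed
        then obtain cu cv cn where ch: "\<And>x. x \<in> K \<Longrightarrow> (\<forall>l\<in>{1..p}. cu x l \<in> U l \<and> cv x l \<in> V l)
            \<and> cn x \<in> K \<and> x = phi A p (cu x) (cv x) (cn x)"
          by metis
        have orbK: "(cn ^^ k) x0 \<in> K" if "x0 \<in> K" for k x0
          using that by (induction k) (auto simp: ch)
        define z where "z = f x"
        have coding: "summable (\<lambda>i. Ainvpow A (Suc i) (dig p us vs (Suc i)))
            \<and> z = (\<Sum>i. Ainvpow A (Suc i) (dig p us vs (Suc i)))
            \<and> (\<forall>j\<ge>1. dig p us vs j \<in> setdiff (D \<inter> translate D (alpha j)) {beta j})
            \<and> (\<Sum>i<2*p. Ainvpow A (Suc i) (dig p us vs (Suc i))) =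
                 Pf A p u0 + Ainvpow A p (Pf A p v0 + Pf A p (cu x0))"
          if x0: "x0 \<in> K" and v0: "\<forall>l\<in>{1..p}. u0 l \<in> U l \<and> v0 l \<in> V l" and z0: "z = phi A p u0 v0 x0"
            and us: "us = (\<lambda>k. case k of 0 \<Rightarrow> u0 | Suc k \<Rightarrow> cu ((cn ^^ k) x0))"
            and vs: "vs = (\<lambda>k. case k of 0 \<Rightarrow> v0 | Suc k \<Rightarrow> cv ((cn ^^ k) x0))"
          for x0 u0 v0 us vs
        proof -
          define xs where "xs = (\<lambda>k. case k of 0 \<Rightarrow> z | Suc k \<Rightarrow> (cn ^^ k) x0)"
          have z0K: "z \<in> K"
          proof -
            have "phi A p u0 v0 \<in> the_IFS A p U V" unfolding the_IFS_phi using v0 by blast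
            hence "phi A p u0 v0 ` K \<subseteq> K" using Keq by blast
            thus ?thesis using z0 x0 by blast
          qed
          have rec: "\<forall>k. xs k = phi A p (us k) (vs k) (xs (Suc k))"
          proof
            fix k show "xs k = phi A p (us k) (vs k) (xs (Suc k))"
            proof (cases k)
              case 0 then show ?thesis using z0 by (simp add: xs_def us vs)
            next
              case (Suc k')
              have "(cn ^^ k') x0 \<in> K" by (rule orbK[OF x0])
              from ch[OF this] show ?thesis by (simp add: xs_def us vs Suc)
            qed
          qed
          have xsK: "xs k \<in> K" for k
            using z0K orbK[OF x0] by (cases k) (auto simp: xs_def)
          have val: "\<forall>k l. l \<in> {1..p} \<longrightarrow> us k l \<in> U l \<and> vs k l \<in> V l"
          proof (intro allI impI)
            fix k l assume l: "l \<in> {1..p}"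
            show "us k l \<in> U l \<and> vs k l \<in> V l"
            proof (cases k)
              case 0 then show ?thesis using v0 l by (simp add: us vs)
            next
              case (Suc k')
              have "(cn ^^ k') x0 \<in> K" by (rule orbK[OF x0])
              from ch[OF this] show ?thesis using l by (simp add: us vs Suc)
            qed
          qed
          have b2: "\<forall>k l. l \<in> {1..p} \<longrightarrow> norm (us k l) \<le> B2 \<and> norm (vs k l) \<le> B2"
            using val B2 by blast
          have b1: "\<forall>k. norm (xs k) \<le> B1" using xsK B1 by blast
          note cs = coding_series[OF inv p c nc rec b1 b2]
          have "xs 0 = z" by (simp add: xs_def)
          moreover have "\<forall>j\<ge>1. dig p us vs j \<in> setdiff (D \<inter> translate D (alpha j)) {beta j}"
            using digits_valid[OF p val h1 h2] by blast
          moreover have "(\<Sum>i<2*p. Ainvpow A (Suc i) (dig p us vs (Suc i))) =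
                 Pf A p u0 + Ainvpow A p (Pf A p v0 + Pf A p (cu x0))"
            using two_blocks[OF inv p, where us=us and vs=vs] by (simp add: us vs)
          ultimately show ?thesis using cs by auto
        qed
        define us1 where "us1 = (\<lambda>k. case k of 0 \<Rightarrow> uf | Suc k \<Rightarrow> cu ((cn ^^ k) x))"
        define vs1 where "vs1 = (\<lambda>k. case k of 0 \<Rightarrow> vf | Suc k \<Rightarrow> cv ((cn ^^ k) x))"
        define us2 where "us2 = (\<lambda>k. case k of 0 \<Rightarrow> ug | Suc k \<Rightarrow> cu ((cn ^^ k) y))"
        define vs2 where "vs2 = (\<lambda>k. case k of 0 \<Rightarrow> vg | Suc k \<Rightarrow> cv ((cn ^^ k) y))"
        have zf: "z = phi A p uf vf x" using z_def f by simp
        have zg: "z = phi A p ug vg y" using z_def fxgy g by simp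
        have c1: "summable (\<lambda>i. Ainvpow A (Suc i) (dig p us1 vs1 (Suc i)))
            \<and> z = (\<Sum>i. Ainvpow A (Suc i) (dig p us1 vs1 (Suc i)))
            \<and> (\<forall>j\<ge>1. dig p us1 vs1 j \<in> setdiff (D \<inter> translate D (alpha j)) {beta j})
            \<and> (\<Sum>i<2*p. Ainvpow A (Suc i) (dig p us1 vs1 (Suc i))) =
                 Pf A p uf + Ainvpow A p (Pf A p vf + Pf A p (cu x))"
          by (rule coding[OF xK vf zf us1_def vs1_def])
        have c2: "summable (\<lambda>i. Ainvpow A (Suc i) (dig p us2 vs2 (Suc i)))
            \<and> z = (\<Sum>i. Ainvpow A (Suc i) (dig p us2 vs2 (Suc i)))
            \<and> (\<forall>j\<ge>1. dig p us2 vs2 j \<in> setdiff (D \<inter> translate D (alpha j)) {beta j})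
            \<and> (\<Sum>i<2*p. Ainvpow A (Suc i) (dig p us2 vs2 (Suc i))) =
                 Pf A p ug + Ainvpow A p (Pf A p vg + Pf A p (cu y))"
          by (rule coding[OF yK vg zg us2_def vs2_def])
        define w1 where "w1 = dig p us1 vs1"
        define w2 where "w2 = dig p us2 vs2"
        define e' where "e' = (\<lambda>j. w1 j - w2 j + alpha j)"
        have e'seq: "e' \<in> seqs (setdiff D D)"
          unfolding seqs_def
        proof (intro CollectI allI impI)
          fix j :: nat assume j: "1 \<le> j"
          have m1: "w1 j \<in> setdiff (D \<inter> translate D (alpha j)) {beta j}" using c1 j w1_def by blast
          have m2: "w2 j \<in> setdiff (D \<inter> translate D (alpha j)) {beta j}" using c2 j w2_def by blast
          obtain d1 where d1: "d1 \<in> D" "w1 j = d1 - beta j" using m1 unfolding setdiff_def by blast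
          obtain d0 where d0: "d0 \<in> D" "w2 j = (d0 + alpha j) - beta j"
            using m2 unfolding setdiff_def translate_def by blast
          have "e' j = d1 - d0" using d1 d0 by (simp add: e'_def)
          thus "e' j \<in> setdiff D D" using d1 d0 unfolding setdiff_def by blast
        qed
        have s1: "summable (\<lambda>i. Ainvpow A (Suc i) (w1 (Suc i)))" using c1 w1_def by simp
        have s2: "summable (\<lambda>i. Ainvpow A (Suc i) (w2 (Suc i)))" using c2 w2_def by simp
        have z1: "(\<Sum>i. Ainvpow A (Suc i) (w1 (Suc i))) = z" using c1 w1_def by simp
        have z2: "(\<Sum>i. Ainvpow A (Suc i) (w2 (Suc i))) = z" using c2 w2_def by simp
        have "piAE A e' = (\<Sum>i. Ainvpow A (Suc i) (w1 (Suc i)) - Ainvpow A (Suc i) (w2 (Suc i))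
              + Ainvpow A (Suc i) (alpha (Suc i)))"
          unfolding piAE_def e'_def
          by (simp add: linear_add[OF linear_Ainvpow] linear_diff[OF linear_Ainvpow])
        also have "\<dots> = z - z + a"
          using suminf_add[OF summable_diff[OF s1 s2] salpha] suminf_diff[OF s1 s2] z1 z2 pa
          unfolding piAE_def by simp
        finally have "is_rep A (setdiff D D) a e'" using e'seq unfolding is_rep_def by simp
        hence "\<forall>j\<ge>1. e' j = alpha j" by (rule uq)
        hence eq: "\<forall>j\<ge>1. w1 j = w2 j" unfolding e'_def by simp
        have "(\<Sum>i<2*p. Ainvpow A (Suc i) (w1 (Suc i))) = (\<Sum>i<2*p. Ainvpow A (Suc i) (w2 (Suc i)))"
          using eq by (intro sum.cong) auto
        hence key: "Pf A p uf + Ainvpow A p (Pf A p vf + Pf A p (cu x)) =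
                    Pf A p ug + Ainvpow A p (Pf A p vg + Pf A p (cu y))"
          using c1 c2 w1_def w2_def by simp
        define H where "H = phi A p (cu x) (cv x)"
        define H' where "H' = phi A p (cu y) (cv x)"
        have HI: "H \<in> the_IFS A p U V" unfolding the_IFS_phi H_def using ch[OF xK] by blast
        have H'I: "H' \<in> the_IFS A p U V" unfolding the_IFS_phi H'_def using ch[OF xK] ch[OF yK] by blast
        interpret L: linear "Ainvpow A p" by (rule linear_Ainvpow)
        have comp: "f (H t) = g (H' t)" for t
        proof -
          have "f (H t) = Pf A p uf + Ainvpow A p (Pf A p vf + Pf A p (cu x)) + Ainvpow A p (Ainvpow A p (Pf A p (cv x) + t))"
            unfolding f H_def phi_eq[OF inv] by (simp add: L.add add.assoc)
          also have "\<dots> = Pf A p ug + Ainvpow A p (Pf A p vg + Pf A p (cu y)) + Ainvpow A p (Ainvpow A p (Pf A p (cv x) + t))"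
            using key by simp
          also have "\<dots> = g (H' t)"
            unfolding g H'_def phi_eq[OF inv] by (simp add: L.add add.assoc)
          finally show ?thesis .
        qed
        obtain Vo where Vo: "Vo \<noteq> {}" "(\<Union>h\<in>the_IFS A p U V. h ` Vo) \<subseteq> Vo"
          "pairwise (\<lambda>f g. disjnt (f ` Vo) (g ` Vo)) (the_IFS A p U V)"
          using assms(12) unfolding open_set_condition_def by blast
        have "disjnt (f ` Vo) (g ` Vo)" using Vo(3) fI gI fg unfolding pairwise_def by blast
        moreover have "H ` Vo \<subseteq> Vo" "H' ` Vo \<subseteq> Vo" using Vo(2) HI H'I by blast+
        moreover obtain t where "t \<in> Vo" using Vo(1) by blast
        ultimately show False using comp unfolding disjnt_def by (metis IntI empty_iff image_eqI image_subset_iff)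
      qed
    qed
  qed
qed


end
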